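(* Let $R$ be a Bézout domain and let $A,B,C\in R^{n\times n}$ satisfy $ABA=ACA$. If $AB$ and $CA$ are group invertible, then $(AB)^{\#}$ is similar to $(CA)^{\#}$.
   Context: A Bézout domain is an integral domain in which every finitely generated ideal is principal. A matrix $M\in R^{n\times n}$ is group invertible if there exists $X\in R^{n\times n}$ with $MX=XM$, $XMX=X$, $MXM=M$; such $X$ is unique and denoted $M^{\#}$ (the group inverse). Two matrices $M,N\in R^{n\times n}$ are similar if $M=S^{-1}NS$ for some invertible $S\in R^{n\times n}$. *)

theory Defs
  imports "Jordan_Normal_Form.Matrix"
begin

definition gen_ideal :: "'a::comm_ring_1 set \<Rightarrow> 'a set" where
  "gen_ideal S = {(\<Sum>x\<in>S. f x * x) | f. True}"

definition bezout_domain :: "'a::idom itself \<Rightarrow> bool" where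
  "bezout_domain _ \<longleftrightarrow>
     (\<forall>S :: 'a set. finite S \<longrightarrow> (\<exists>d. gen_ideal S = {r * d | r. True}))"

definition is_group_inverse :: "'a::comm_ring_1 mat \<Rightarrow> 'a mat \<Rightarrow> bool" where
  "is_group_inverse M X \<longleftrightarrow>
     X \<in> carrier_mat (dim_row M) (dim_col M) \<and>
     M * X = X * M \<and> X * M * X = X \<and> M * X * M = M"

definition group_invertible :: "'a::comm_ring_1 mat \<Rightarrow> bool" where
  "group_invertible M \<longleftrightarrow> (\<exists>X. is_group_inverse M X)"

definition group_inv :: "'a::comm_ring_1 mat \<Rightarrow> 'a mat" where
  "group_inv M = (THE X. is_group_inverse M X)"

end

theory Submission
  imports Defs "Jordan_Normal_Form.Determinant"
begin

lemma assoc_dim: "dim_col A = dim_row B \<Longrightarrow> dim_col B = dim_row C \<Longrightarrow> A * B * C = (A * (B * C) :: 'a :: semiring_0 mat)"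
  by (rule assoc_mult_mat[of A "dim_row A" "dim_col A" B "dim_col B" C "dim_col C"]; simp only: carrier_mat_def mem_Collect_eq; simp)

lemma gi_unique:
  fixes M :: "'a::comm_ring_1 mat"
  assumes M: "M \<in> carrier_mat n n" and X: "is_group_inverse M X" and Y: "is_group_inverse M Y"
  shows "X = Y"
proof -
  have cX: "X \<in> carrier_mat n n" and x1: "M * X = X * M" and x2: "X * M * X = X" and x3: "M * X * M = M"
    using X M unfolding is_group_inverse_def by auto
  have cY: "Y \<in> carrier_mat n n" and y1: "M * Y = Y * M" and y2: "Y * M * Y = Y" and y3: "M * Y * M = M"
    using Y M unfolding is_group_inverse_def by auto
  have "X * M = X * (M * Y * M)" using y3 by simp
  also have "\<dots> = (X * M) * (Y * M)" using M cX cY by (simp add: assoc_dim)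
  finally have p1: "X * M = (X * M) * (M * Y)" by (simp only: y1)
  have "M * Y = (M * X * M) * Y" using x3 by simp
  also have "\<dots> = (M * X) * (M * Y)" using M cX cY by (simp add: assoc_dim)
  finally have p2: "M * Y = (X * M) * (M * Y)" by (simp only: x1)
  have p: "M * X = M * Y"
  proof -
    have "M * X = X * M" by (rule x1)
    also have "\<dots> = (X * M) * (M * Y)" by (rule p1)
    also have "\<dots> = M * Y" by (rule p2[symmetric])
    finally show ?thesis .
  qed
  have "X = X * M * X" using x2 by simp
  also have "\<dots> = X * (M * X)" using M cX cY by (simp add: assoc_dim)
  also have "\<dots> = X * (M * Y)" by (simp only: p)
  also have "\<dots> = (X * M) * Y" using M cX cY by (simp add: assoc_dim)
  also have "\<dots> = (Y * M) * Y" by (metis x1 p y1)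
  also have "\<dots> = Y" using y2 .
  finally show ?thesis .
qed

lemma gi_props:
  fixes M :: "'a::comm_ring_1 mat"
  assumes M: "M \<in> carrier_mat n n" and g: "group_invertible M"
  shows "is_group_inverse M (group_inv M)"
proof -
  obtain X where X: "is_group_inverse M X" using g unfolding group_invertible_def by auto
  show ?thesis unfolding group_inv_def
    by (rule theI[of _ X]) (use X gi_unique[OF M] in blast)+
qed

lemma left_inv_dim:
  fixes P :: "'a::idom mat"
  assumes P: "P \<in> carrier_mat a b" and Q: "Q \<in> carrier_mat b a" and PQ: "P * Q = 1\<^sub>m a"
  shows "a \<le> b"
proof (rule ccontr)
  assume "\<not> a \<le> b" hence ba: "b < a" by simp
  define P' where "P' = four_block_mat P (0\<^sub>m a (a-b)) (0\<^sub>m 0 b) (0\<^sub>m 0 (a-b))"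
  define Q' where "Q' = four_block_mat Q (0\<^sub>m b 0) (0\<^sub>m (a-b) a) (0\<^sub>m (a-b) 0)"
  have "P' \<in> carrier_mat (a+0) (b+(a-b))" unfolding P'_def using P by (intro four_block_carrier_mat) auto
  hence cP': "P' \<in> carrier_mat a a" using ba by simp
  have "Q' \<in> carrier_mat (b+(a-b)) (a+0)" unfolding Q'_def using Q by (intro four_block_carrier_mat) auto
  hence cQ': "Q' \<in> carrier_mat a a" using ba by simp
  have "P' * Q' = four_block_mat (P * Q + 0\<^sub>m a (a-b) * 0\<^sub>m (a-b) a) (P * 0\<^sub>m b 0 + 0\<^sub>m a (a-b) * 0\<^sub>m (a-b) 0)
     (0\<^sub>m 0 b * Q + 0\<^sub>m 0 (a-b) * 0\<^sub>m (a-b) a) (0\<^sub>m 0 b * 0\<^sub>m b 0 + 0\<^sub>m 0 (a-b) * 0\<^sub>m (a-b) 0)"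
    unfolding P'_def Q'_def by (rule mult_four_block_mat) (use P Q in auto)
  also have "\<dots> = four_block_mat (1\<^sub>m a) (0\<^sub>m a 0) (0\<^sub>m 0 a) (0\<^sub>m 0 0)"
    using P Q PQ by simp
  also have "\<dots> = 1\<^sub>m a" by (rule eq_matI) auto
  finally have PQ': "P' * Q' = 1\<^sub>m a" .
  have v: "P' *\<^sub>v unit_vec a (a-1) = 0\<^sub>v a"
  proof (rule eq_vecI)
    fix i assume "i < dim_vec (0\<^sub>v a :: 'a vec)"
    hence i: "i < a" by simp
    have "(P' *\<^sub>v unit_vec a (a-1)) $ i = row P' i \<bullet> unit_vec a (a-1)" using i cP' by simp
    also have "\<dots> = row P' i $ (a-1)" using ba by simp
    also have "\<dots> = P' $$ (i, a-1)" using i cP' ba by simp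
    also have "\<dots> = 0" unfolding P'_def using i ba P by simp
    finally show "(P' *\<^sub>v unit_vec a (a-1)) $ i = 0\<^sub>v a $ i" using i by simp
  qed (use cP' in simp)
  have "det P' = 0" unfolding det_0_iff_vec_prod_zero[OF cP']
    by (rule exI[of _ "unit_vec a (a-1)"]) (use v ba in auto)
  hence "det (P' * Q') = 0" using det_mult[OF cP' cQ'] by simp
  thus False using PQ' by simp
qed

lemma bez_fam:
  fixes a :: "nat \<Rightarrow> 'a::idom"
  assumes bz: "bezout_domain TYPE('a)"
  shows "\<exists>d c. (\<forall>i<n. d dvd a i) \<and> d = (\<Sum>i<n. c i * a i)"
proof (induction n)
  case 0 show ?case by (rule exI[of _ 0]) simp
next
  case (Suc n)
  then obtain d c where dv: "\<forall>i<n. d dvd a i" and dc: "d = (\<Sum>i<n. c i * a i)" by auto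
  have fin: "finite {d, a n}" by simp
  obtain e where e: "gen_ideal {d, a n} = {r * e | r. True}"
    using bz fin unfolding bezout_domain_def by blast
  have "e \<in> gen_ideal {d, a n}" unfolding e by (auto intro: exI[of _ 1])
  then obtain g where g: "e = (\<Sum>x\<in>{d, a n}. g x * x)" unfolding gen_ideal_def by auto
  have "d \<in> gen_ideal {d, a n}" unfolding gen_ideal_def
    by (rule CollectI, rule exI[of _ "\<lambda>x. if x = d then 1 else 0"]) (cases "d = a n"; simp)
  then obtain r1 where r1: "d = r1 * e" unfolding e by auto
  have "a n \<in> gen_ideal {d, a n}" unfolding gen_ideal_def
    by (rule CollectI, rule exI[of _ "\<lambda>x. if x = a n then 1 else 0"]) (cases "d = a n"; simp)
  then obtain r2 where r2: "a n = r2 * e" unfolding e by auto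
  define c' where "c' i = (if i < n then g d * c i else (if d = a n then 0 else g (a n)))" for i
  have "(\<Sum>i<Suc n. c' i * a i) = (\<Sum>i<n. g d * c i * a i) + c' n * a n"
    by (simp add: c'_def)
  also have "(\<Sum>i<n. g d * c i * a i) = g d * d" unfolding dc by (simp add: sum_distrib_left mult.assoc)
  also have "g d * d + c' n * a n = e" unfolding g c'_def by (cases "d = a n"; simp)
  finally have sum: "e = (\<Sum>i<Suc n. c' i * a i)" by simp
  have "\<forall>i<Suc n. e dvd a i"
  proof (intro allI impI)
    fix i assume "i < Suc n"
    hence "i < n \<or> i = n" by auto
    thus "e dvd a i"
    proof
      assume "i < n" hence "d dvd a i" using dv by auto
      moreover have "e dvd d" using r1 by simp
      ultimately show ?thesis using dvd_trans by blast
    next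
      assume "i = n" thus ?thesis using r2 by simp
    qed
  qed
  thus ?case using sum by blast
qed

lemma unimod:
  fixes E :: "'a::idom mat"
  assumes bz: "bezout_domain TYPE('a)" and E: "E \<in> carrier_mat n n" and idem: "E * E = E"
    and nz: "E \<noteq> 0\<^sub>m n n"
  shows "\<exists>W F. W \<in> carrier_mat n 1 \<and> F \<in> carrier_mat 1 n \<and> E * W = W \<and> F * W = 1\<^sub>m 1"
proof -
  obtain i j where ij: "i < n" "j < n" "E $$ (i,j) \<noteq> 0"
  proof (rule ccontr)
    assume "\<not> thesis"
    hence "\<forall>i<n. \<forall>j<n. E $$ (i,j) = 0" using that by blast
    hence "E = 0\<^sub>m n n" by (intro eq_matI) (use E in auto)
    thus False using nz by simp
  qed
  define a where "a l = E $$ (l, j)" for l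
  obtain d c where dv: "\<forall>l<n. d dvd a l" and dc: "d = (\<Sum>l<n. c l * a l)"
    using bez_fam[OF bz] by blast
  have d0: "d \<noteq> 0" using dv ij a_def by auto
  define r where "r l = (SOME q. a l = d * q)" for l
  have r: "a l = d * r l" if "l < n" for l
  proof -
    have "\<exists>q. a l = d * q" using dv that by (auto elim: dvdE)
    thus ?thesis unfolding r_def by (rule someI_ex)
  qed
  define W where "W = mat n 1 (\<lambda>(l,_). r l)"
  define F where "F = mat 1 n (\<lambda>(_,l). c l)"
  have cW: "W \<in> carrier_mat n 1" and cF: "F \<in> carrier_mat 1 n" unfolding W_def F_def by auto
  have "d * (\<Sum>l<n. c l * r l) = (\<Sum>l<n. c l * a l)"
    by (simp add: sum_distrib_left r mult.left_commute)
  hence "d * (\<Sum>l<n. c l * r l) = d * 1" using dc by simp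
  hence sum1: "(\<Sum>l<n. c l * r l) = 1" using d0 by simp
  have FW: "F * W = 1\<^sub>m 1"
  proof (rule eq_matI)
    fix i' j' assume "i' < dim_row (1\<^sub>m 1 :: 'a mat)" "j' < dim_col (1\<^sub>m 1 :: 'a mat)"
    hence "i' = 0" "j' = 0" by auto
    have "(F * W) $$ (0, 0) = (\<Sum>l\<in>{0..<n}. c l * r l)"
      unfolding F_def W_def by (simp add: scalar_prod_def)
    thus "(F * W) $$ (i', j') = 1\<^sub>m 1 $$ (i', j')" using sum1 \<open>i' = 0\<close> \<open>j' = 0\<close>
      by (simp add: atLeast0LessThan)
  qed (use cF cW in auto)
  have EW: "E * W = W"
  proof (rule eq_matI)
    fix i' j' assume a1: "i' < dim_row W" "j' < dim_col W"
    hence i': "i' < n" and j': "j' = 0" using cW by auto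
    have eq: "(E * W) $$ (i', 0) = (\<Sum>l\<in>{0..<n}. E $$ (i', l) * r l)"
      unfolding W_def using E i' by (simp add: scalar_prod_def)
    have "d * (\<Sum>l\<in>{0..<n}. E $$ (i', l) * r l) = (\<Sum>l\<in>{0..<n}. E $$ (i', l) * a l)"
      by (simp add: sum_distrib_left r mult.left_commute)
    also have "\<dots> = (E * E) $$ (i', j)" using E i' ij by (simp add: scalar_prod_def a_def)
    also have "\<dots> = d * r i'" using idem r[OF i'] a_def by simp
    finally have "(\<Sum>l\<in>{0..<n}. E $$ (i', l) * r l) = r i'" using d0 by simp
    thus "(E * W) $$ (i', j') = W $$ (i', j')" using eq i' j' unfolding W_def by simp
  qed (use E cW in auto)
  show ?thesis using cW cF EW FW by blast
qed

lemma minus_zero_mat[simp]: "A \<in> carrier_mat nr nc \<Longrightarrow> A - 0\<^sub>m nr nc = (A :: 'a :: ab_group_add mat)"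
  by (intro eq_matI) auto

lemma fb_id: "E \<in> carrier_mat n m \<Longrightarrow> four_block_mat E (0\<^sub>m n 0) (0\<^sub>m 0 m) (0\<^sub>m 0 0) = E"
  by (intro eq_matI) auto

lemma peel_aux:
  fixes E :: "'a::idom mat"
  assumes bz: "bezout_domain TYPE('a)" and E: "E \<in> carrier_mat n n" and idem: "E * E = E"
  shows "n - k = m \<Longrightarrow> U \<in> carrier_mat n k \<Longrightarrow> V \<in> carrier_mat k n \<Longrightarrow> V * U = 1\<^sub>m k
    \<Longrightarrow> E * U = U \<Longrightarrow> V * E = V
    \<Longrightarrow> \<exists>k' U' V'. U' \<in> carrier_mat n k' \<and> V' \<in> carrier_mat k' n \<and> U' * V' = E \<and> V' * U' = 1\<^sub>m k'"
proof (induction m arbitrary: k U V rule: less_induct)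
  case (less m)
  note U = less.prems(2) and V = less.prems(3) and VU = less.prems(4) and EU = less.prems(5) and VE = less.prems(6)
  define E' where "E' = E - U * V"
  have UV: "U * V \<in> carrier_mat n n" using U V by simp
  have cE': "E' \<in> carrier_mat n n" unfolding E'_def using E UV by (simp add: minus_carrier_mat)
  have VE': "V * E' = 0\<^sub>m k n"
  proof -
    have "V * E' = V * E - V * (U * V)" unfolding E'_def using V E UV by (simp add: mult_minus_distrib_mat)
    also have "V * (U * V) = (V * U) * V" using U V by (simp add: assoc_dim)
    finally show ?thesis using VE VU V by simp
  qed
  have E'U: "E' * U = 0\<^sub>m n k"
  proof -
    have "E' * U = E * U - (U * V) * U" unfolding E'_def using U E UV by (simp add: minus_mult_distrib_mat)
    also have "(U * V) * U = U * (V * U)" using U V by (simp add: assoc_dim)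
    finally show ?thesis using EU VU U by simp
  qed
  have EE': "E * E' = E'"
  proof -
    have "E * E' = E * E - E * (U * V)" unfolding E'_def using E UV by (simp add: mult_minus_distrib_mat)
    also have "E * (U * V) = (E * U) * V" using E U V by (simp add: assoc_dim)
    finally show ?thesis using EU idem unfolding E'_def by simp
  qed
  have E'E: "E' * E = E'"
  proof -
    have "E' * E = E * E - (U * V) * E" unfolding E'_def using E UV by (simp add: minus_mult_distrib_mat)
    also have "(U * V) * E = U * (V * E)" using E U V by (simp add: assoc_dim)
    finally show ?thesis using VE idem unfolding E'_def by simp
  qed
  have E'E': "E' * E' = E'"
  proof -
    have "(E - U * V) * E' = E * E' - (U * V) * E'" by (rule minus_mult_distrib_mat[OF E UV cE'])
    hence "E' * E' = E * E' - (U * V) * E'" unfolding E'_def[symmetric] .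
    also have "(U * V) * E' = U * (V * E')" using cE' U V by (simp add: assoc_dim)
    finally show ?thesis using VE' EE' U cE' by simp
  qed
  show ?case
  proof (cases "E' = 0\<^sub>m n n")
    case True
    have "U * V = E"
    proof (rule eq_matI)
      fix i j assume "i < dim_row E" "j < dim_col E"
      hence ij: "i < n" "j < n" using E by auto
      have "E' $$ (i,j) = 0" using True ij by simp
      hence "E $$ (i,j) - (U * V) $$ (i,j) = 0" unfolding E'_def using ij carrier_matD[OF E] carrier_matD[OF UV] by simp
      thus "(U * V) $$ (i, j) = E $$ (i, j)" by simp
    qed (use E UV in auto)
    then show ?thesis using U V VU by blast
  next
    case False
    obtain W F where W: "W \<in> carrier_mat n 1" and F: "F \<in> carrier_mat 1 n" and E'W: "E' * W = W"
      and FW: "F * W = 1\<^sub>m 1"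
      using unimod[OF bz cE' E'E' False] by blast
    define P where "P = F * E'"
    have cP: "P \<in> carrier_mat 1 n" unfolding P_def using F cE' by simp
    have VW: "V * W = 0\<^sub>m k 1"
    proof -
      have "V * W = V * (E' * W)" using E'W by simp
      also have "\<dots> = (V * E') * W" using V cE' W by (simp add: assoc_dim)
      finally show ?thesis using VE' W by simp
    qed
    have PU: "P * U = 0\<^sub>m 1 k"
    proof -
      have "P * U = F * (E' * U)" unfolding P_def using F cE' U by (simp add: assoc_dim)
      thus ?thesis using E'U F by simp
    qed
    have PW: "P * W = 1\<^sub>m 1"
    proof -
      have "P * W = F * (E' * W)" unfolding P_def using F cE' W by (simp add: assoc_dim)
      thus ?thesis using E'W FW by simp
    qed
    have EW: "E * W = W"
    proof -
      have "E * W = E * (E' * W)" using E'W by simp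
      also have "\<dots> = (E * E') * W" using E cE' W by (simp add: assoc_dim)
      finally show ?thesis using EE' E'W by simp
    qed
    have PE: "P * E = P"
    proof -
      have "P * E = F * (E' * E)" unfolding P_def using F cE' E by (simp add: assoc_dim)
      thus ?thesis using E'E unfolding P_def by simp
    qed
    define U1 where "U1 = four_block_mat U W (0\<^sub>m 0 k) (0\<^sub>m 0 1)"
    define V1 where "V1 = four_block_mat V (0\<^sub>m k 0) P (0\<^sub>m 1 0)"
    have "U1 \<in> carrier_mat (n+0) (k+1)" unfolding U1_def using U by (intro four_block_carrier_mat) auto
    hence cU1: "U1 \<in> carrier_mat n (k+1)" by simp
    have "V1 \<in> carrier_mat (k+1) (n+0)" unfolding V1_def using V by (intro four_block_carrier_mat) auto
    hence cV1: "V1 \<in> carrier_mat (k+1) n" by simp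
    have "V1 * U1 = four_block_mat (V * U + 0\<^sub>m k 0 * 0\<^sub>m 0 k) (V * W + 0\<^sub>m k 0 * 0\<^sub>m 0 1)
        (P * U + 0\<^sub>m 1 0 * 0\<^sub>m 0 k) (P * W + 0\<^sub>m 1 0 * 0\<^sub>m 0 1)"
      unfolding V1_def U1_def by (rule mult_four_block_mat) (use U V W cP in auto)
    also have "\<dots> = four_block_mat (1\<^sub>m k) (0\<^sub>m k 1) (0\<^sub>m 1 k) (1\<^sub>m 1)"
      using VU VW PU PW by simp
    also have "\<dots> = 1\<^sub>m (k+1)" by simp
    finally have V1U1: "V1 * U1 = 1\<^sub>m (k+1)" .
    have "E * U1 = four_block_mat E (0\<^sub>m n 0) (0\<^sub>m 0 n) (0\<^sub>m 0 0) * U1" using fb_id[OF E] by simp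
    also have "\<dots> = four_block_mat (E * U + 0\<^sub>m n 0 * 0\<^sub>m 0 k) (E * W + 0\<^sub>m n 0 * 0\<^sub>m 0 1)
        (0\<^sub>m 0 n * U + 0\<^sub>m 0 0 * 0\<^sub>m 0 k) (0\<^sub>m 0 n * W + 0\<^sub>m 0 0 * 0\<^sub>m 0 1)"
      unfolding U1_def by (rule mult_four_block_mat) (use U E W in auto)
    also have "\<dots> = U1" unfolding U1_def using EU EW U W by simp
    finally have EU1: "E * U1 = U1" .
    have "V1 * E = V1 * four_block_mat E (0\<^sub>m n 0) (0\<^sub>m 0 n) (0\<^sub>m 0 0)" using fb_id[OF E] by simp
    also have "\<dots> = four_block_mat (V * E + 0\<^sub>m k 0 * 0\<^sub>m 0 n) (V * 0\<^sub>m n 0 + 0\<^sub>m k 0 * 0\<^sub>m 0 0)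
        (P * E + 0\<^sub>m 1 0 * 0\<^sub>m 0 n) (P * 0\<^sub>m n 0 + 0\<^sub>m 1 0 * 0\<^sub>m 0 0)"
      unfolding V1_def by (rule mult_four_block_mat) (use V E cP in auto)
    also have "\<dots> = V1" unfolding V1_def using VE PE V cP by simp
    finally have V1E: "V1 * E = V1" .
    have "k + 1 \<le> n" by (rule left_inv_dim[OF cV1 cU1 V1U1])
    hence lt: "n - (k+1) < m" using less.prems(1) by simp
    show ?thesis by (rule less.IH[OF lt refl cU1 cV1 V1U1 EU1 V1E])
  qed
qed

lemma peel:
  fixes E :: "'a::idom mat"
  assumes bz: "bezout_domain TYPE('a)" and E: "E \<in> carrier_mat n n" and idem: "E * E = E"
  shows "\<exists>k U V. U \<in> carrier_mat n k \<and> V \<in> carrier_mat k n \<and> U * V = E \<and> V * U = 1\<^sub>m k"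
  by (rule peel_aux[OF bz E idem, where k=0 and m=n and U="0\<^sub>m n 0" and V="0\<^sub>m 0 n"]) (use E in auto)

lemma idem_compl:
  fixes e :: "'a::comm_ring_1 mat"
  assumes e: "e \<in> carrier_mat n n" and ee: "e * e = e"
  shows "e * (1\<^sub>m n - e) = 0\<^sub>m n n" "(1\<^sub>m n - e) * e = 0\<^sub>m n n"
    "(1\<^sub>m n - e) * (1\<^sub>m n - e) = 1\<^sub>m n - e" "1\<^sub>m n - e \<in> carrier_mat n n"
proof -
  show c: "1\<^sub>m n - e \<in> carrier_mat n n" using e by (simp add: minus_carrier_mat)
  show z1: "e * (1\<^sub>m n - e) = 0\<^sub>m n n"
    using e ee by (simp add: mult_minus_distrib_mat[OF e one_carrier_mat e])
  show z2: "(1\<^sub>m n - e) * e = 0\<^sub>m n n"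
    using e ee by (simp add: minus_mult_distrib_mat[OF one_carrier_mat e e])
  show "(1\<^sub>m n - e) * (1\<^sub>m n - e) = 1\<^sub>m n - e"
    using e ee c z1 by (simp add: minus_mult_distrib_mat[OF one_carrier_mat e c])
qed

lemma zprod:
  fixes X Y p q :: "'a::comm_ring_1 mat"
  assumes X: "X \<in> carrier_mat a n" and Y: "Y \<in> carrier_mat n b" and p: "p \<in> carrier_mat n n"
    and q: "q \<in> carrier_mat n n" and Xp: "X * p = X" and qY: "q * Y = Y" and pq: "p * q = 0\<^sub>m n n"
  shows "X * Y = 0\<^sub>m a b"
proof -
  have "X * Y = (X * p) * (q * Y)" using Xp qY by simp
  also have "\<dots> = X * ((p * q) * Y)" using X Y p q by (simp add: assoc_dim)
  finally show ?thesis using pq X Y by simp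
qed

lemma rank_sum:
  fixes E :: "'a::idom mat"
  assumes E: "E \<in> carrier_mat n n" and idem: "E * E = E"
    and U1: "U1 \<in> carrier_mat n k1" and V1: "V1 \<in> carrier_mat k1 n" and UV1: "U1 * V1 = E" and VU1: "V1 * U1 = 1\<^sub>m k1"
    and U2: "U2 \<in> carrier_mat n k2" and V2: "V2 \<in> carrier_mat k2 n" and UV2: "U2 * V2 = 1\<^sub>m n - E" and VU2: "V2 * U2 = 1\<^sub>m k2"
  shows "k1 + k2 = n"
proof -
  note ic = idem_compl[OF E idem]
  define P where "P = four_block_mat U1 U2 (0\<^sub>m 0 k1) (0\<^sub>m 0 k2)"
  define Q where "Q = four_block_mat V1 (0\<^sub>m k1 0) V2 (0\<^sub>m k2 0)"
  have "P \<in> carrier_mat (n+0) (k1+k2)" unfolding P_def using U1 U2 by (intro four_block_carrier_mat) auto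
  hence cP: "P \<in> carrier_mat n (k1+k2)" by simp
  have "Q \<in> carrier_mat (k1+k2) (n+0)" unfolding Q_def using V1 V2 by (intro four_block_carrier_mat) auto
  hence cQ: "Q \<in> carrier_mat (k1+k2) n" by simp
  have V1E: "V1 * E = V1"
  proof -
    have "V1 * E = (V1 * U1) * V1" unfolding UV1[symmetric] using U1 V1 by (simp add: assoc_dim)
    thus ?thesis using VU1 V1 by simp
  qed
  have EU1: "E * U1 = U1"
  proof -
    have "E * U1 = U1 * (V1 * U1)" unfolding UV1[symmetric] using U1 V1 by (simp add: assoc_dim)
    thus ?thesis using VU1 U1 by simp
  qed
  have V2E: "V2 * (1\<^sub>m n - E) = V2"
  proof -
    have "V2 * (1\<^sub>m n - E) = (V2 * U2) * V2" unfolding UV2[symmetric] using U2 V2 by (simp add: assoc_dim)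
    thus ?thesis using VU2 V2 by simp
  qed
  have EU2: "(1\<^sub>m n - E) * U2 = U2"
  proof -
    have "(1\<^sub>m n - E) * U2 = U2 * (V2 * U2)" unfolding UV2[symmetric] using U2 V2 by (simp add: assoc_dim)
    thus ?thesis using VU2 U2 by simp
  qed
  have z12: "V1 * U2 = 0\<^sub>m k1 k2" by (rule zprod[OF V1 U2 E ic(4) V1E EU2 ic(1)])
  have z21: "V2 * U1 = 0\<^sub>m k2 k1" by (rule zprod[OF V2 U1 ic(4) E V2E EU1 ic(2)])
  have "Q * P = four_block_mat (V1 * U1 + 0\<^sub>m k1 0 * 0\<^sub>m 0 k1) (V1 * U2 + 0\<^sub>m k1 0 * 0\<^sub>m 0 k2)
        (V2 * U1 + 0\<^sub>m k2 0 * 0\<^sub>m 0 k1) (V2 * U2 + 0\<^sub>m k2 0 * 0\<^sub>m 0 k2)"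
    unfolding P_def Q_def by (rule mult_four_block_mat) (use U1 U2 V1 V2 in auto)
  also have "\<dots> = four_block_mat (1\<^sub>m k1) (0\<^sub>m k1 k2) (0\<^sub>m k2 k1) (1\<^sub>m k2)"
    using VU1 VU2 z12 z21 by simp
  also have "\<dots> = 1\<^sub>m (k1 + k2)" by simp
  finally have QP: "Q * P = 1\<^sub>m (k1 + k2)" .
  have sum: "U1 * V1 + U2 * V2 = 1\<^sub>m n" unfolding UV1 UV2 by (rule eq_matI) (use E in auto)
  have "P * Q = four_block_mat (U1 * V1 + U2 * V2) (U1 * 0\<^sub>m k1 0 + U2 * 0\<^sub>m k2 0)
        (0\<^sub>m 0 k1 * V1 + 0\<^sub>m 0 k2 * V2) (0\<^sub>m 0 k1 * 0\<^sub>m k1 0 + 0\<^sub>m 0 k2 * 0\<^sub>m k2 0)"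
    unfolding P_def Q_def by (rule mult_four_block_mat) (use U1 U2 V1 V2 in auto)
  also have "\<dots> = four_block_mat (1\<^sub>m n) (0\<^sub>m n 0) (0\<^sub>m 0 n) (0\<^sub>m 0 0)"
    using sum U1 U2 V1 V2 by simp
  also have "\<dots> = 1\<^sub>m n" by (rule fb_id) simp
  finally have PQ: "P * Q = 1\<^sub>m n" .
  have "k1 + k2 \<le> n" by (rule left_inv_dim[OF cQ cP QP])
  moreover have "n \<le> k1 + k2" by (rule left_inv_dim[OF cP cQ PQ])
  ultimately show ?thesis by simp
qed

lemma cancel:
  fixes e f U V :: "'a::idom mat"
  assumes bz: "bezout_domain TYPE('a)"
    and e: "e \<in> carrier_mat n n" and f: "f \<in> carrier_mat n n"
    and U: "U \<in> carrier_mat n n" and V: "V \<in> carrier_mat n n"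
    and ee: "e * e = e" and ff: "f * f = f" and UV: "U * V = e" and VU: "V * U = f"
    and Uf: "U * f = U" and Ve: "V * e = V"
  shows "\<exists>U' V'. U' \<in> carrier_mat n n \<and> V' \<in> carrier_mat n n \<and>
     U' * V' = 1\<^sub>m n - e \<and> V' * U' = 1\<^sub>m n - f \<and>
     (1\<^sub>m n - e) * U' = U' \<and> U' * (1\<^sub>m n - f) = U' \<and> (1\<^sub>m n - f) * V' = V' \<and> V' * (1\<^sub>m n - e) = V'"
proof -
  note ice = idem_compl[OF e ee] and icf = idem_compl[OF f ff]
  obtain k1 U1 V1 where U1: "U1 \<in> carrier_mat n k1" and V1: "V1 \<in> carrier_mat k1 n"
    and UV1: "U1 * V1 = e" and VU1: "V1 * U1 = 1\<^sub>m k1" using peel[OF bz e ee] by blast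
  obtain k2 U2 V2 where U2: "U2 \<in> carrier_mat n k2" and V2: "V2 \<in> carrier_mat k2 n"
    and UV2: "U2 * V2 = 1\<^sub>m n - e" and VU2: "V2 * U2 = 1\<^sub>m k2" using peel[OF bz ice(4) ice(3)] by blast
  obtain k3 U3 V3 where U3: "U3 \<in> carrier_mat n k3" and V3: "V3 \<in> carrier_mat k3 n"
    and UV3: "U3 * V3 = f" and VU3: "V3 * U3 = 1\<^sub>m k3" using peel[OF bz f ff] by blast
  obtain k4 U4 V4 where U4: "U4 \<in> carrier_mat n k4" and V4: "V4 \<in> carrier_mat k4 n"
    and UV4: "U4 * V4 = 1\<^sub>m n - f" and VU4: "V4 * U4 = 1\<^sub>m k4" using peel[OF bz icf(4) icf(3)] by blast
  have s12: "k1 + k2 = n" by (rule rank_sum[OF e ee U1 V1 UV1 VU1 U2 V2 UV2 VU2])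
  have s34: "k3 + k4 = n" by (rule rank_sum[OF f ff U3 V3 UV3 VU3 U4 V4 UV4 VU4])
  define \<alpha> where "\<alpha> = V1 * U * U3"
  define \<beta> where "\<beta> = V3 * V * U1"
  have ca: "\<alpha> \<in> carrier_mat k1 k3" unfolding \<alpha>_def using V1 U U3 by simp
  have cb: "\<beta> \<in> carrier_mat k3 k1" unfolding \<beta>_def using V3 V U1 by simp
  have "\<alpha> * \<beta> = V1 * (U * (U3 * V3) * V) * U1" unfolding \<alpha>_def \<beta>_def
    using V1 U U3 V3 V U1 by (simp add: assoc_dim)
  also have "U * (U3 * V3) * V = e" using UV3 Uf UV by simp
  also have "V1 * e * U1 = (V1 * U1) * (V1 * U1)" unfolding UV1[symmetric]
    using V1 U1 by (simp add: assoc_dim)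
  finally have ab: "\<alpha> * \<beta> = 1\<^sub>m k1" using VU1 by simp
  have "\<beta> * \<alpha> = V3 * (V * (U1 * V1) * U) * U3" unfolding \<alpha>_def \<beta>_def
    using V1 U U3 V3 V U1 by (simp add: assoc_dim)
  also have "V * (U1 * V1) * U = f" using UV1 Ve VU by simp
  also have "V3 * f * U3 = (V3 * U3) * (V3 * U3)" unfolding UV3[symmetric]
    using V3 U3 by (simp add: assoc_dim)
  finally have ba: "\<beta> * \<alpha> = 1\<^sub>m k3" using VU3 by simp
  have "k1 \<le> k3" by (rule left_inv_dim[OF ca cb ab])
  moreover have "k3 \<le> k1" by (rule left_inv_dim[OF cb ca ba])
  ultimately have "k1 = k3" by simp
  hence k24: "k4 = k2" using s12 s34 by simp
  have V4': "V4 \<in> carrier_mat k2 n" using V4 k24 by simp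
  have U4': "U4 \<in> carrier_mat n k2" using U4 k24 by simp
  have VU4': "V4 * U4 = 1\<^sub>m k2" using VU4 k24 by simp
  have EU2: "(1\<^sub>m n - e) * U2 = U2"
  proof -
    have "(1\<^sub>m n - e) * U2 = U2 * (V2 * U2)" unfolding UV2[symmetric] using U2 V2 by (simp add: assoc_dim)
    thus ?thesis using VU2 U2 by simp
  qed
  have V2E: "V2 * (1\<^sub>m n - e) = V2"
  proof -
    have "V2 * (1\<^sub>m n - e) = (V2 * U2) * V2" unfolding UV2[symmetric] using U2 V2 by (simp add: assoc_dim)
    thus ?thesis using VU2 V2 by simp
  qed
  have FU4: "(1\<^sub>m n - f) * U4 = U4"
  proof -
    have "(1\<^sub>m n - f) * U4 = U4 * (V4 * U4)" unfolding UV4[symmetric] using U4' V4' by (simp add: assoc_dim)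
    thus ?thesis using VU4' U4' by simp
  qed
  have V4F: "V4 * (1\<^sub>m n - f) = V4"
  proof -
    have "V4 * (1\<^sub>m n - f) = (V4 * U4) * V4" unfolding UV4[symmetric] using U4' V4' by (simp add: assoc_dim)
    thus ?thesis using VU4' V4' by simp
  qed
  define U' where "U' = U2 * V4"
  define V' where "V' = U4 * V2"
  have cU': "U' \<in> carrier_mat n n" unfolding U'_def using U2 V4' by simp
  have cV': "V' \<in> carrier_mat n n" unfolding V'_def using U4' V2 by simp
  have 1: "U' * V' = 1\<^sub>m n - e"
  proof -
    have "U' * V' = U2 * (V4 * U4) * V2" unfolding U'_def V'_def using U2 V4' U4' V2 by (simp add: assoc_dim)
    thus ?thesis using VU4' UV2 U2 by simp
  qed
  have 2: "V' * U' = 1\<^sub>m n - f"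
  proof -
    have "V' * U' = U4 * (V2 * U2) * V4" unfolding U'_def V'_def using U2 V4' U4' V2 by (simp add: assoc_dim)
    thus ?thesis using VU2 UV4 U4' by simp
  qed
  have 3: "(1\<^sub>m n - e) * U' = U'"
  proof -
    have "(1\<^sub>m n - e) * U' = ((1\<^sub>m n - e) * U2) * V4" unfolding U'_def using U2 V4' ice(4) by (simp add: assoc_dim)
    thus ?thesis using EU2 unfolding U'_def by simp
  qed
  have 4: "U' * (1\<^sub>m n - f) = U'"
  proof -
    have "U' * (1\<^sub>m n - f) = U2 * (V4 * (1\<^sub>m n - f))" unfolding U'_def using U2 V4' icf(4) by (simp add: assoc_dim)
    thus ?thesis using V4F unfolding U'_def by simp
  qed
  have 5: "(1\<^sub>m n - f) * V' = V'"
  proof -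
    have "(1\<^sub>m n - f) * V' = ((1\<^sub>m n - f) * U4) * V2" unfolding V'_def using U4' V2 icf(4) by (simp add: assoc_dim)
    thus ?thesis using FU4 unfolding V'_def by simp
  qed
  have 6: "V' * (1\<^sub>m n - e) = V'"
  proof -
    have "V' * (1\<^sub>m n - e) = U4 * (V2 * (1\<^sub>m n - e))" unfolding V'_def using U4' V2 ice(4) by (simp add: assoc_dim)
    thus ?thesis using V2E unfolding V'_def by simp
  qed
  show ?thesis using cU' cV' 1 2 3 4 5 6 by blast
qed

lemma sim_assemble:
  fixes e f U V U' V' G H :: "'a::comm_ring_1 mat"
  assumes e: "e \<in> carrier_mat n n" and f: "f \<in> carrier_mat n n"
    and U: "U \<in> carrier_mat n n" and V: "V \<in> carrier_mat n n"
    and U': "U' \<in> carrier_mat n n" and V': "V' \<in> carrier_mat n n"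
    and G: "G \<in> carrier_mat n n" and H: "H \<in> carrier_mat n n"
    and ee: "e * e = e" and ff: "f * f = f"
    and UV: "U * V = e" and VU: "V * U = f"
    and U'V': "U' * V' = 1\<^sub>m n - e" and V'U': "V' * U' = 1\<^sub>m n - f"
    and eU: "e * U = U" and Uf: "U * f = U" and fV: "f * V = V" and Ve: "V * e = V"
    and eU': "(1\<^sub>m n - e) * U' = U'" and U'f: "U' * (1\<^sub>m n - f) = U'"
    and fV': "(1\<^sub>m n - f) * V' = V'" and V'e: "V' * (1\<^sub>m n - e) = V'"
    and fH: "f * H = H" and Hf: "H * f = H"
    and GUHV: "G = U * H * V"
  shows "similar_mat G H"
proof -
  note ice = idem_compl[OF e ee] and icf = idem_compl[OF f ff]
  define S where "S = U + U'"
  define T where "T = V + V'"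
  have cS: "S \<in> carrier_mat n n" unfolding S_def using U U' by simp
  have cT: "T \<in> carrier_mat n n" unfolding T_def using V V' by simp
  have z1: "U * V' = 0\<^sub>m n n" by (rule zprod[OF U V' f icf(4) Uf fV' icf(1)])
  have z2: "U' * V = 0\<^sub>m n n" by (rule zprod[OF U' V icf(4) f U'f fV icf(2)])
  have z3: "V * U' = 0\<^sub>m n n" by (rule zprod[OF V U' e ice(4) Ve eU' ice(1)])
  have z4: "V' * U = 0\<^sub>m n n" by (rule zprod[OF V' U ice(4) e V'e eU ice(2)])
  have z5: "U' * H = 0\<^sub>m n n" by (rule zprod[OF U' H icf(4) f U'f fH icf(2)])
  have UH: "U * H \<in> carrier_mat n n" using U H by simp
  have UHf: "U * H * f = U * H" using U H f Hf by (simp add: assoc_dim)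
  have z6: "U * H * V' = 0\<^sub>m n n" by (rule zprod[OF UH V' f icf(4) UHf fV' icf(1)])
  have "S * T = U * T + U' * T" unfolding S_def using U U' cT by (simp add: add_mult_distrib_mat)
  also have "U * T = U * V + U * V'" unfolding T_def using U V V' by (simp add: mult_add_distrib_mat)
  also have "U' * T = U' * V + U' * V'" unfolding T_def using U' V V' by (simp add: mult_add_distrib_mat)
  finally have "S * T = e + 0\<^sub>m n n + (0\<^sub>m n n + (1\<^sub>m n - e))" using UV z1 z2 U'V' by simp
  also have "\<dots> = 1\<^sub>m n" by (rule eq_matI) (use e in auto)
  finally have ST: "S * T = 1\<^sub>m n" .
  have "T * S = V * S + V' * S" unfolding T_def using V V' cS by (simp add: add_mult_distrib_mat)
  also have "V * S = V * U + V * U'" unfolding S_def using U V U' by (simp add: mult_add_distrib_mat)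
  also have "V' * S = V' * U + V' * U'" unfolding S_def using U V' U' by (simp add: mult_add_distrib_mat)
  finally have "T * S = f + 0\<^sub>m n n + (0\<^sub>m n n + (1\<^sub>m n - f))" using VU z3 z4 V'U' by simp
  also have "\<dots> = 1\<^sub>m n" by (rule eq_matI) (use f in auto)
  finally have TS: "T * S = 1\<^sub>m n" .
  have "S * H = U * H + U' * H" unfolding S_def using U U' H by (simp add: add_mult_distrib_mat)
  also have "\<dots> = U * H" using z5 UH by simp
  finally have SH: "S * H = U * H" .
  have "S * H * T = U * H * V + U * H * V'" unfolding SH T_def using UH V V' by (simp add: mult_add_distrib_mat)
  also have "\<dots> = G" using z6 GUHV U H V by simp
  finally have SHT: "G = S * H * T" by simp
  have "similar_mat_wit G H S T" unfolding similar_mat_wit_def Let_def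
    using G H cS cT ST TS SHT by auto
  thus ?thesis unfolding similar_mat_def by blast
qed

theorem theorem3p1:
  fixes A B C :: "'a::idom mat" and n :: nat
  assumes "bezout_domain TYPE('a)"
    and "A \<in> carrier_mat n n" and "B \<in> carrier_mat n n" and "C \<in> carrier_mat n n"
    and "A * B * A = A * C * A"
    and "group_invertible (A * B)" and "group_invertible (C * A)"
  shows "similar_mat (group_inv (A * B)) (group_inv (C * A))"
proof -
  note bz = assms(1) and cA = assms(2) and cB = assms(3) and cC = assms(4) and ABA = assms(5)
  define X where "X = A * B"
  define Y where "Y = C * A"
  define G where "G = group_inv X"
  define H where "H = group_inv Y"
  have cX: "X \<in> carrier_mat n n" unfolding X_def using cA cB by simp
  have cY: "Y \<in> carrier_mat n n" unfolding Y_def using cA cC by simp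
  have gX: "is_group_inverse X G" unfolding G_def by (rule gi_props[OF cX]) (use assms(6) X_def in simp)
  have gY: "is_group_inverse Y H" unfolding H_def by (rule gi_props[OF cY]) (use assms(7) Y_def in simp)
  have cG: "G \<in> carrier_mat n n" and g1: "X * G = G * X" and g2: "G * X * G = G" and g3: "X * G * X = X"
    using gX cX unfolding is_group_inverse_def by auto
  have cH: "H \<in> carrier_mat n n" and h1: "Y * H = H * Y" and h2: "H * Y * H = H" and h3: "Y * H * Y = Y"
    using gY cY unfolding is_group_inverse_def by auto
  note c = cA cB cC cX cY cG cH
  have ABX: "A * B = X" unfolding X_def ..
  have XA: "X * A = A * Y"
  proof -
    have "X * A = A * C * A" unfolding X_def using ABA by simp
    also have "\<dots> = A * Y" unfolding Y_def using c by (simp add: assoc_dim)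
    finally show ?thesis .
  qed
  have YBA: "Y * B * A = Y * Y"
  proof -
    have "Y * B * A = C * (A * B * A)" unfolding Y_def using c by (simp add: assoc_dim)
    also have "\<dots> = C * (A * C * A)" by (simp only: ABA)
    also have "\<dots> = Y * Y" unfolding Y_def using c by (simp add: assoc_dim)
    finally show ?thesis .
  qed
  have G1: "G * G * X = G"
  proof -
    have "G * G * X = G * (G * X)" using c by (simp add: assoc_dim)
    also have "\<dots> = G * (X * G)" by (simp only: g1)
    also have "\<dots> = G * X * G" using c by (simp add: assoc_dim)
    finally show ?thesis using g2 by simp
  qed
  have Y1: "Y * Y * H = Y"
  proof -
    have "Y * Y * H = Y * (Y * H)" using c by (simp add: assoc_dim)
    also have "\<dots> = Y * (H * Y)" by (simp only: h1)
    also have "\<dots> = Y * H * Y" using c by (simp add: assoc_dim)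
    finally show ?thesis using h3 by simp
  qed
  have X1: "G * X * X = X"
  proof -
    have "G * X * X = (X * G) * X" by (simp only: g1)
    thus ?thesis using g3 by simp
  qed
  have H1: "Y * H * H = H"
  proof -
    have "Y * H * H = (H * Y) * H" by (simp only: h1)
    thus ?thesis using h2 by simp
  qed
  have XXGG: "X * X * G * G = X * G"
  proof -
    have "X * X * G * G = X * (X * G) * G" using c by (simp add: assoc_dim)
    also have "\<dots> = X * (G * X) * G" by (simp only: g1)
    also have "\<dots> = (X * G * X) * G" using c by (simp add: assoc_dim)
    finally show ?thesis using g3 by simp
  qed
  have XXA: "X * X * A = A * Y * Y"
  proof -
    have "X * X * A = X * (X * A)" using c by (simp add: assoc_dim)
    also have "\<dots> = X * (A * Y)" by (simp only: XA)
    also have "\<dots> = (X * A) * Y" using c by (simp add: assoc_dim)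
    also have "\<dots> = A * Y * Y" by (simp only: XA)
    finally show ?thesis .
  qed
  have GA1: "G * A = X * G * A * H"
  proof -
    have "G * A = (G * G * X) * A" by (simp only: G1)
    also have "\<dots> = G * G * (X * A)" using c by (simp add: assoc_dim)
    also have "\<dots> = G * G * (A * Y)" by (simp only: XA)
    also have "\<dots> = G * G * (A * (Y * Y * H))" by (simp only: Y1)
    also have "\<dots> = G * G * (A * Y * Y) * H" using c by (simp add: assoc_dim)
    also have "\<dots> = G * G * (X * X * A) * H" by (simp only: XXA)
    also have "\<dots> = (G * G * X) * X * A * H" using c by (simp add: assoc_dim)
    also have "\<dots> = G * X * A * H" by (simp only: G1)
    also have "\<dots> = X * G * A * H" by (simp only: g1)
    finally show ?thesis .
  qed
  have AH1: "A * H = X * G * A * H"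
  proof -
    have "A * H = A * (Y * H * H)" by (simp only: H1)
    also have "\<dots> = (A * Y) * H * H" using c by (simp add: assoc_dim)
    also have "\<dots> = (X * A) * H * H" by (simp only: XA)
    also have "\<dots> = (G * X * X) * A * H * H" by (simp only: X1)
    also have "\<dots> = G * X * (X * A) * H * H" using c by (simp add: assoc_dim)
    also have "\<dots> = G * X * (A * Y) * H * H" by (simp only: XA)
    also have "\<dots> = G * X * A * (Y * H * H)" using c by (simp add: assoc_dim)
    also have "\<dots> = G * X * A * H" by (simp only: H1)
    also have "\<dots> = X * G * A * H" by (simp only: g1)
    finally show ?thesis .
  qed
  have GA: "G * A = A * H" using GA1 AH1 by simp
  define e where "e = X * G"
  define f where "f = Y * H"
  define U where "U = A * f"
  define V where "V = Y * B * G * G"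
  have ce: "e \<in> carrier_mat n n" unfolding e_def using c by simp
  have cf: "f \<in> carrier_mat n n" unfolding f_def using c by simp
  have cU: "U \<in> carrier_mat n n" unfolding U_def using c cf by simp
  have cV: "V \<in> carrier_mat n n" unfolding V_def using c by (metis mult_carrier_mat)
  have ee: "e * e = e"
  proof -
    have "e * e = (X * G * X) * G" unfolding e_def using c by (simp add: assoc_dim)
    thus ?thesis using g3 unfolding e_def by simp
  qed
  have ff: "f * f = f"
  proof -
    have "f * f = (Y * H * Y) * H" unfolding f_def using c by (simp add: assoc_dim)
    thus ?thesis using h3 unfolding f_def by simp
  qed
  have UV: "U * V = e"
  proof -
    have "U * V = A * (Y * H * Y) * B * G * G" unfolding U_def V_def f_def using c by (simp add: assoc_dim)
    also have "\<dots> = A * Y * B * G * G" by (simp only: h3)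
    also have "\<dots> = (X * A) * B * G * G" by (simp only: XA)
    also have "\<dots> = X * (A * B) * G * G" using c by (simp add: assoc_dim)
    also have "\<dots> = X * X * G * G" by (simp only: ABX)
    also have "\<dots> = e" unfolding e_def by (rule XXGG)
    finally show ?thesis .
  qed
  have VU: "V * U = f"
  proof -
    have "V * U = Y * B * (G * (G * A)) * (Y * H)" unfolding U_def V_def f_def using c by (simp add: assoc_dim)
    also have "\<dots> = Y * B * (G * (A * H)) * (Y * H)" by (simp only: GA)
    also have "\<dots> = Y * B * ((G * A) * H) * (Y * H)" using c by (simp add: assoc_dim)
    also have "\<dots> = Y * B * ((A * H) * H) * (Y * H)" by (simp only: GA)
    also have "\<dots> = (Y * B * A) * (H * (H * Y * H))" using c by (simp add: assoc_dim)
    also have "\<dots> = (Y * Y) * (H * H)" by (simp only: YBA h2)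
    also have "\<dots> = Y * (Y * H) * H" using c by (simp add: assoc_dim)
    also have "\<dots> = Y * (H * Y) * H" by (simp only: h1)
    also have "\<dots> = (Y * H * Y) * H" using c by (simp add: assoc_dim)
    also have "\<dots> = f" unfolding f_def by (simp only: h3)
    finally show ?thesis .
  qed
  have eU: "e * U = U"
  proof -
    have "e * U = X * (G * A) * (Y * H)" unfolding e_def U_def f_def using c by (simp add: assoc_dim)
    also have "\<dots> = X * (A * H) * (Y * H)" by (simp only: GA)
    also have "\<dots> = (X * A) * (H * Y * H)" using c by (simp add: assoc_dim)
    also have "\<dots> = (A * Y) * H" by (simp only: XA h2)
    also have "\<dots> = U" unfolding U_def f_def using c by (simp add: assoc_dim)
    finally show ?thesis .
  qed
  have Uf: "U * f = U"
  proof -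
    have "U * f = A * (Y * H * Y) * H" unfolding U_def f_def using c by (simp add: assoc_dim)
    also have "\<dots> = A * Y * H" by (simp only: h3)
    also have "\<dots> = U" unfolding U_def f_def using c by (simp add: assoc_dim)
    finally show ?thesis .
  qed
  have fV: "f * V = V"
  proof -
    have "f * V = (Y * H * Y) * B * G * G" unfolding V_def f_def using c by (simp add: assoc_dim)
    also have "\<dots> = V" unfolding V_def by (simp only: h3)
    finally show ?thesis .
  qed
  have Ve: "V * e = V"
  proof -
    have "V * e = Y * B * G * (G * X * G)" unfolding V_def e_def using c by (simp add: assoc_dim)
    also have "\<dots> = V" unfolding V_def by (simp only: g2)
    finally show ?thesis .
  qed
  have fH: "f * H = H" unfolding f_def by (rule H1)
  have Hf: "H * f = H"
  proof -
    have "H * f = H * Y * H" unfolding f_def using c by (simp add: assoc_dim)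
    thus ?thesis using h2 by simp
  qed
  have GUHV: "G = U * H * V"
  proof -
    have "U * H * V = A * (Y * H * H) * Y * B * G * G" unfolding U_def V_def f_def using c by (simp add: assoc_dim)
    also have "\<dots> = (A * H) * Y * B * G * G" by (simp only: H1)
    also have "\<dots> = (G * A) * Y * B * G * G" by (simp only: GA)
    also have "\<dots> = G * (A * Y) * B * G * G" using c by (simp add: assoc_dim)
    also have "\<dots> = G * (X * A) * B * G * G" by (simp only: XA)
    also have "\<dots> = G * (X * (A * B) * G * G)" using c by (simp add: assoc_dim)
    also have "\<dots> = G * (X * X * G * G)" by (simp only: ABX)
    also have "\<dots> = G * (X * G)" by (simp only: XXGG)
    also have "\<dots> = G * X * G" using c by (simp add: assoc_dim)
    also have "\<dots> = G" by (rule g2)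
    finally show ?thesis by simp
  qed
  obtain U' V' where cU': "U' \<in> carrier_mat n n" and cV': "V' \<in> carrier_mat n n"
    and U'V': "U' * V' = 1\<^sub>m n - e" and V'U': "V' * U' = 1\<^sub>m n - f"
    and eU': "(1\<^sub>m n - e) * U' = U'" and U'f: "U' * (1\<^sub>m n - f) = U'"
    and fV': "(1\<^sub>m n - f) * V' = V'" and V'e: "V' * (1\<^sub>m n - e) = V'"
    using cancel[OF bz ce cf cU cV ee ff UV VU Uf Ve] by blast
  have "similar_mat G H"
    by (rule sim_assemble[OF ce cf cU cV cU' cV' cG cH ee ff UV VU U'V' V'U' eU Uf fV Ve eU' U'f fV' V'e fH Hf GUHV])
  thus ?thesis unfolding G_def H_def X_def Y_def .
qed

end
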